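(* Let $X$ be a finite-dimensional simplicial complex such that for all vertices $x,y$ of $X$, $\Sigma_x\subseteq\Sigma_y$ implies $x=y$. Then $X$ is simplicially isomorphic to $\mathcal{N}(\mathcal{N}(X))$.
   Context: For a vertex $x$ of $X$, $\Sigma_x$ is the collection of maximal simplices of $X$ containing $x$. A maximal simplex of a simplicial complex $Y$ is a maximal collection of vertices such that every finite subset is a simplex of $Y$. For a simplicial complex $Y$, $\mathcal{N}(Y)$ is the nerve of the collection of maximal simplices of $Y$: its vertices are the maximal simplices of $Y$, and a finite set of them is a simplex iff their common intersection is non-empty. *)

theory Defs
  imports Main
begin

definition simplicial_complex :: "'a set set \<Rightarrow> bool" where
  "simplicial_complex K \<longleftrightarrow>
     (\<forall>\<sigma>\<in>K. finite \<sigma> \<and> \<sigma> \<noteq> {}) \<and>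
     (\<forall>\<sigma>\<in>K. \<forall>\<tau>. \<tau> \<subseteq> \<sigma> \<and> \<tau> \<noteq> {} \<longrightarrow> \<tau> \<in> K)"

definition vertices :: "'a set set \<Rightarrow> 'a set" where
  "vertices K = \<Union>K"

definition finite_dimensional :: "'a set set \<Rightarrow> bool" where
  "finite_dimensional K \<longleftrightarrow> (\<exists>n::nat. \<forall>\<sigma>\<in>K. card \<sigma> \<le> n)"

definition clique :: "'a set set \<Rightarrow> 'a set \<Rightarrow> bool" where
  "clique K M \<longleftrightarrow> M \<subseteq> vertices K \<and>
     (\<forall>F. F \<subseteq> M \<and> finite F \<and> F \<noteq> {} \<longrightarrow> F \<in> K)"

definition max_simplex :: "'a set set \<Rightarrow> 'a set \<Rightarrow> bool" where
  "max_simplex K M \<longleftrightarrow> clique K M \<and> (\<forall>M'. clique K M' \<and> M \<subseteq> M' \<longrightarrow> M' = M)"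

definition Sigma_v :: "'a set set \<Rightarrow> 'a \<Rightarrow> 'a set set" where
  "Sigma_v K x = {M. max_simplex K M \<and> x \<in> M}"

definition nerve :: "'a set set \<Rightarrow> 'a set set set" where
  "nerve K = {S. finite S \<and> S \<noteq> {} \<and> (\<forall>M\<in>S. max_simplex K M) \<and> \<Inter>S \<noteq> {}}"

definition simplicial_iso :: "'a set set \<Rightarrow> 'b set set \<Rightarrow> ('a \<Rightarrow> 'b) \<Rightarrow> bool" where
  "simplicial_iso K L f \<longleftrightarrow> bij_betw f (vertices K) (vertices L) \<and>
     (\<forall>\<sigma>. \<sigma> \<subseteq> vertices K \<longrightarrow> (\<sigma> \<in> K \<longleftrightarrow> f ` \<sigma> \<in> L))"

end

theory Submission
  imports Defs
begin

lemma simplex_clique: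
  assumes sc: "simplicial_complex X" and s: "\<sigma> \<in> X"
  shows "clique X \<sigma>"
  using assms unfolding simplicial_complex_def clique_def vertices_def by blast

lemma clique_bound:
  assumes sc: "simplicial_complex X" and b: "\<forall>\<sigma>\<in>X. card \<sigma> \<le> n" and c: "clique X M"
  shows "finite M \<and> card M \<le> n"
proof -
  have fin: "finite M"
  proof (rule ccontr)
    assume "\<not> finite M"
    then obtain F where F: "F \<subseteq> M" "finite F" "card F = Suc n"
      using infinite_arbitrarily_large by blast
    then have "F \<noteq> {}" by auto
    with F c have "F \<in> X" unfolding clique_def by blast
    with b F show False by auto
  qed
  show ?thesis
  proof (cases "M = {}")
    case True then show ?thesis by simp
  next
    case False
    with fin c have "M \<in> X" unfolding clique_def by blast
    with b fin show ?thesis by auto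
  qed
qed

lemma exists_max:
  assumes sc: "simplicial_complex X" and b: "\<forall>\<sigma>\<in>X. card \<sigma> \<le> n" and s: "\<sigma> \<in> X"
  shows "\<exists>M. max_simplex X M \<and> \<sigma> \<subseteq> M"
proof -
  let ?P = "\<lambda>M. clique X M \<and> \<sigma> \<subseteq> M"
  have "?P \<sigma>" using simplex_clique[OF sc s] by simp
  then obtain M where M: "?P M" and le: "\<forall>M'. ?P M' \<longrightarrow> n - card M \<le> n - card M'"
    using ex_has_least_nat[of ?P \<sigma> "\<lambda>M. n - card M"] by blast
  have "max_simplex X M"
    unfolding max_simplex_def
  proof (intro conjI allI impI)
    show "clique X M" using M by simp
    fix M' assume a: "clique X M' \<and> M \<subseteq> M'"
    then have "?P M'" using M by auto
    with le have "n - card M \<le> n - card M'" by blast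
    moreover have "finite M'" "card M' \<le> n" using clique_bound[OF sc b] a by auto
    moreover have "card M \<le> card M'" using card_mono a \<open>finite M'\<close> by blast
    ultimately have "card M = card M'" by linarith
    then show "M' = M" using card_subset_eq[OF \<open>finite M'\<close>] a by metis
  qed
  with M show ?thesis by blast
qed

lemma max_nonempty:
  assumes sc: "simplicial_complex X" and ne: "X \<noteq> {}" and m: "max_simplex X M"
  shows "M \<noteq> {}"
proof
  assume "M = {}"
  obtain \<sigma> where s: "\<sigma> \<in> X" using ne by blast
  have "clique X \<sigma>" using simplex_clique[OF sc s] .
  with m \<open>M = {}\<close> have "\<sigma> = {}" unfolding max_simplex_def by blast
  with s sc show False unfolding simplicial_complex_def by blast
qed

lemma vertices_nerve:
  "vertices (nerve K) = {M. max_simplex K M \<and> M \<noteq> {}}"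
proof
  show "vertices (nerve K) \<subseteq> {M. max_simplex K M \<and> M \<noteq> {}}"
    unfolding vertices_def nerve_def by blast
  show "{M. max_simplex K M \<and> M \<noteq> {}} \<subseteq> vertices (nerve K)"
  proof
    fix M assume "M \<in> {M. max_simplex K M \<and> M \<noteq> {}}"
    then have "{M} \<in> nerve K" unfolding nerve_def by auto
    then show "M \<in> vertices (nerve K)" unfolding vertices_def by blast
  qed
qed

lemma fip:
  assumes C: "C \<noteq> {}" and fin: "\<forall>M\<in>C. finite M"
    and int: "\<forall>S. finite S \<and> S \<noteq> {} \<and> S \<subseteq> C \<longrightarrow> \<Inter>S \<noteq> {}"
  shows "\<Inter>C \<noteq> {}"
proof -
  obtain M where M: "M \<in> C" using C by blast
  let ?P = "\<lambda>S. finite S \<and> S \<subseteq> C \<and> M \<in> S"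
  have "?P {M}" using M by simp
  then obtain S0 where S0: "?P S0" and le: "\<forall>S. ?P S \<longrightarrow> card (\<Inter>S0) \<le> card (\<Inter>S)"
    using ex_has_least_nat[of ?P "{M}" "\<lambda>S. card (\<Inter>S)"] by blast
  have ne: "\<Inter>S0 \<noteq> {}" using int S0 by blast
  have sub: "\<Inter>S0 \<subseteq> \<Inter>C"
  proof
    fix z assume z: "z \<in> \<Inter>S0"
    show "z \<in> \<Inter>C"
    proof
      fix N assume N: "N \<in> C"
      have P: "?P (insert N S0)" using S0 N by auto
      then have "card (\<Inter>S0) \<le> card (\<Inter>(insert N S0))" using le by blast
      moreover have "finite (\<Inter>S0)" using S0 fin M by (meson Inter_lower finite_subset)
      moreover have "\<Inter>(insert N S0) \<subseteq> \<Inter>S0" by auto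
      ultimately have "\<Inter>(insert N S0) = \<Inter>S0" by (meson card_seteq)
      with z show "z \<in> N" by auto
    qed
  qed
  with ne show ?thesis by blast
qed

lemma max_finite:
  assumes sc: "simplicial_complex X" and b: "\<forall>\<sigma>\<in>X. card \<sigma> \<le> n" and m: "max_simplex X M"
  shows "finite M"
  using clique_bound[OF sc b] m unfolding max_simplex_def by blast

lemma max_in:
  assumes sc: "simplicial_complex X" and b: "\<forall>\<sigma>\<in>X. card \<sigma> \<le> n" and m: "max_simplex X M"
    and ne: "M \<noteq> {}"
  shows "M \<in> X"
  using max_finite[OF sc b m] m ne unfolding max_simplex_def clique_def by blast

lemma nerve_clique_sub:
  assumes sc: "simplicial_complex X" and b: "\<forall>\<sigma>\<in>X. card \<sigma> \<le> n"
    and c: "clique (nerve X) C" and ne: "C \<noteq> {}"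
  shows "\<exists>z\<in>vertices X. C \<subseteq> Sigma_v X z"
proof -
  have CV: "C \<subseteq> vertices (nerve X)" using c unfolding clique_def by blast
  then have maxs: "\<forall>M\<in>C. max_simplex X M \<and> M \<noteq> {}" using vertices_nerve by blast
  have "\<forall>M\<in>C. finite M" using maxs max_finite[OF sc b] by blast
  moreover have "\<forall>S. finite S \<and> S \<noteq> {} \<and> S \<subseteq> C \<longrightarrow> \<Inter>S \<noteq> {}"
    using c unfolding clique_def nerve_def by blast
  ultimately have "\<Inter>C \<noteq> {}" using fip[OF ne] by blast
  then obtain z where z: "z \<in> \<Inter>C" by blast
  obtain M where M: "M \<in> C" using ne by blast
  have "M \<in> X" using max_in[OF sc b] maxs M by blast
  then have "z \<in> vertices X" using z M unfolding vertices_def by blast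
  moreover have "C \<subseteq> Sigma_v X z" using z maxs unfolding Sigma_v_def by blast
  ultimately show ?thesis by blast
qed

lemma Sigma_ne:
  assumes sc: "simplicial_complex X" and b: "\<forall>\<sigma>\<in>X. card \<sigma> \<le> n" and x: "x \<in> vertices X"
  shows "Sigma_v X x \<noteq> {}"
proof -
  obtain \<sigma> where "\<sigma> \<in> X" "x \<in> \<sigma>" using x unfolding vertices_def by blast
  then obtain M where "max_simplex X M" "\<sigma> \<subseteq> M" using exists_max[OF sc b] by blast
  then show ?thesis unfolding Sigma_v_def using \<open>x \<in> \<sigma>\<close> by blast
qed

lemma Sigma_clique:
  assumes sc: "simplicial_complex X" and b: "\<forall>\<sigma>\<in>X. card \<sigma> \<le> n" and x: "x \<in> vertices X"
  shows "clique (nerve X) (Sigma_v X x)"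
  unfolding clique_def
proof (intro conjI allI impI)
  show "Sigma_v X x \<subseteq> vertices (nerve X)"
    unfolding vertices_nerve Sigma_v_def by blast
  fix F assume "F \<subseteq> Sigma_v X x \<and> finite F \<and> F \<noteq> {}"
  then show "F \<in> nerve X" unfolding nerve_def Sigma_v_def by blast
qed

lemma Sigma_max:
  assumes sc: "simplicial_complex X" and b: "\<forall>\<sigma>\<in>X. card \<sigma> \<le> n" and x: "x \<in> vertices X"
    and h: "\<forall>x\<in>vertices X. \<forall>y\<in>vertices X. Sigma_v X x \<subseteq> Sigma_v X y \<longrightarrow> x = y"
  shows "max_simplex (nerve X) (Sigma_v X x)"
  unfolding max_simplex_def
proof (intro conjI allI impI)
  show "clique (nerve X) (Sigma_v X x)" using Sigma_clique[OF sc b x] .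
  fix C assume a: "clique (nerve X) C \<and> Sigma_v X x \<subseteq> C"
  then have "C \<noteq> {}" using Sigma_ne[OF sc b x] by blast
  then obtain z where z: "z \<in> vertices X" "C \<subseteq> Sigma_v X z"
    using nerve_clique_sub[OF sc b] a by blast
  then have "x = z" using h x a by blast
  with a z show "C = Sigma_v X x" by blast
qed

lemma max_nerve_Sigma:
  assumes sc: "simplicial_complex X" and b: "\<forall>\<sigma>\<in>X. card \<sigma> \<le> n"
    and m: "max_simplex (nerve X) C" and ne: "C \<noteq> {}"
  shows "\<exists>z\<in>vertices X. C = Sigma_v X z"
proof -
  obtain z where z: "z \<in> vertices X" "C \<subseteq> Sigma_v X z"
    using nerve_clique_sub[OF sc b] m ne unfolding max_simplex_def by blast
  then have "Sigma_v X z = C" using m Sigma_clique[OF sc b z(1)] unfolding max_simplex_def by blast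
  with z show ?thesis by blast
qed

theorem theorem3p1:
  fixes X :: "'a set set"
  assumes "simplicial_complex X"
    and "finite_dimensional X"
    and "\<forall>x\<in>vertices X. \<forall>y\<in>vertices X. Sigma_v X x \<subseteq> Sigma_v X y \<longrightarrow> x = y"
  shows "\<exists>f. simplicial_iso X (nerve (nerve X)) f"
proof -
  note sc = assms(1) and h = assms(3)
  obtain n where b: "\<forall>\<sigma>\<in>X. card \<sigma> \<le> n" using assms(2) unfolding finite_dimensional_def by blast
  let ?f = "Sigma_v X"
  have inj: "inj_on ?f (vertices X)" unfolding inj_on_def using h by blast
  have VNN: "vertices (nerve (nerve X)) = ?f ` vertices X"
  proof
    show "vertices (nerve (nerve X)) \<subseteq> ?f ` vertices X"
      unfolding vertices_nerve[of "nerve X"] using max_nerve_Sigma[OF sc b] by blast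
    show "?f ` vertices X \<subseteq> vertices (nerve (nerve X))"
      unfolding vertices_nerve[of "nerve X"] using Sigma_max[OF sc b _ h] Sigma_ne[OF sc b] by blast
  qed
  have "simplicial_iso X (nerve (nerve X)) ?f"
    unfolding simplicial_iso_def
  proof (intro conjI allI impI)
    show "bij_betw ?f (vertices X) (vertices (nerve (nerve X)))"
      using inj VNN unfolding bij_betw_def by blast
    fix \<sigma> assume sv: "\<sigma> \<subseteq> vertices X"
    show "\<sigma> \<in> X \<longleftrightarrow> ?f ` \<sigma> \<in> nerve (nerve X)"
    proof
      assume s: "\<sigma> \<in> X"
      then have fs: "finite \<sigma>" "\<sigma> \<noteq> {}" using sc unfolding simplicial_complex_def by auto
      obtain M where M: "max_simplex X M" "\<sigma> \<subseteq> M" using exists_max[OF sc b s] by blast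
      have "M \<in> \<Inter>(?f ` \<sigma>)" using M unfolding Sigma_v_def by blast
      moreover have "\<forall>C\<in>?f ` \<sigma>. max_simplex (nerve X) C" using Sigma_max[OF sc b _ h] sv by blast
      ultimately show "?f ` \<sigma> \<in> nerve (nerve X)" using fs unfolding nerve_def by blast
    next
      assume a: "?f ` \<sigma> \<in> nerve (nerve X)"
      then have "finite (?f ` \<sigma>)" "?f ` \<sigma> \<noteq> {}" unfolding nerve_def by auto
      then have fs: "finite \<sigma>" "\<sigma> \<noteq> {}"
        using finite_imageD inj_on_subset[OF inj sv] by auto
      obtain M where "M \<in> \<Inter>(?f ` \<sigma>)" using a unfolding nerve_def by blast
      then have M: "max_simplex X M" "\<sigma> \<subseteq> M"
        using fs(2) unfolding Sigma_v_def by blast+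
      then show "\<sigma> \<in> X" using fs unfolding max_simplex_def clique_def by blast
    qed
  qed
  then show ?thesis by blast
qed

end
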